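(* Let $X$ be a real random variable with density $p$, $\mathbb{E}X=0$, $\mathrm{Var}(X)=1$, $\mathbb{E}|X|^s<\infty$ for some $s>2$, and suppose $\|p-\phi\|_2\le1$. Then there exist $C_1,C_2>0$ such that \[ D(X)\le (C_1+\|p-\phi\|_\infty)\big(\|p-\phi\|_1+\|p-\phi\|_2\big)+C_2(\mathbb{E}|X|^s)^{2/s}\big(\|p-\phi\|_1+\|p-\phi\|_2\big)^{1-2/s}. \]
   Context: $\phi(x)=(2\pi)^{-1/2}e^{-x^2/2}$. $D(X)$ denotes the Kullback–Leibler divergence of $X$ from a Gaussian with the same mean and variance as $X$; here $D(X)=\int p\ln(p/\phi)$. $\|\cdot\|_q$ is the $L^q(\mathbb{R})$ norm. *)

theory Defs
  imports "HOL-Probability.Probability"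
begin

definition phi :: "real \<Rightarrow> real" where
  "phi x = exp (- (x ^ 2) / 2) / sqrt (2 * pi)"

definition ext_integral :: "(real \<Rightarrow> real) \<Rightarrow> ereal" where
  "ext_integral g = enn2ereal (\<integral>\<^sup>+ x. ennreal (g x) \<partial>lborel)
                    - enn2ereal (\<integral>\<^sup>+ x. ennreal (- g x) \<partial>lborel)"

text \<open>D(X) = int p ln(p/phi) (with 0 ln 0 = 0, as ln 0 = 0 in Isabelle).\<close>
definition KL_div :: "(real \<Rightarrow> real) \<Rightarrow> ereal" where
  "KL_div p = ext_integral (\<lambda>x. p x * ln (p x / phi x))"

definition Lq_norm :: "real \<Rightarrow> (real \<Rightarrow> real) \<Rightarrow> ereal" where
  "Lq_norm q f = (let I = (\<integral>\<^sup>+ x. ennreal (\<bar>f x\<bar> powr q) \<partial>lborel) in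
     if I = \<infinity> then \<infinity> else ereal ((enn2real I) powr (1 / q)))"

definition Linf_norm :: "(real \<Rightarrow> real) \<Rightarrow> ereal" where
  "Linf_norm f = esssup lborel (\<lambda>x. ereal \<bar>f x\<bar>)"

end

theory Submission
  imports Defs
begin

lemma phi_facts:
  shows "phi x > 0" "phi x \<le> 1" "ln (phi x) = - (x^2/2) - ln (sqrt (2*pi))"
    "phi x = std_normal_density x"
proof -
  have sp: "sqrt (2*pi) \<ge> 1" using pi_gt3 by simp
  show "phi x > 0" unfolding phi_def by simp
  have "exp (- (x^2)/2) \<le> 1" by simp
  then have "exp (- (x^2)/2) / sqrt (2*pi) \<le> 1 / 1" using sp by (intro frac_le) auto
  then show "phi x \<le> 1" unfolding phi_def by simp
  show "ln (phi x) = - (x^2/2) - ln (sqrt (2*pi))" unfolding phi_def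
    by (subst ln_div) auto
  show "phi x = std_normal_density x" unfolding phi_def std_normal_density_def by simp
qed

lemma phi_int: "integrable lborel phi"
proof -
  have "integrable lborel (\<lambda>x. std_normal_density x * x^0)"
    by (rule integrable_std_normal_moment)
  then show ?thesis by (simp add: phi_facts(4)[abs_def])
qed

lemma L1_eq:
  assumes "integrable lborel f"
  shows "Lq_norm 1 f = ereal (\<integral>x. \<bar>f x\<bar> \<partial>lborel)"
proof -
  have "(\<integral>\<^sup>+ x. ennreal (\<bar>f x\<bar> powr 1) \<partial>lborel) = (\<integral>\<^sup>+ x. ennreal (\<bar>f x\<bar>) \<partial>lborel)"
    by simp
  also have "\<dots> = ennreal (\<integral>x. \<bar>f x\<bar> \<partial>lborel)"
    using assms by (intro nn_integral_eq_integral) auto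
  finally show ?thesis unfolding Lq_norm_def Let_def by simp
qed

lemma L2_fin:
  assumes "Lq_norm 2 f \<le> 1"
  obtains N2 where "N2 \<ge> 0" "Lq_norm 2 f = ereal N2"
proof -
  let ?I = "\<integral>\<^sup>+ x. ennreal (\<bar>f x\<bar> powr 2) \<partial>lborel"
  have "?I \<noteq> \<infinity>" using assms unfolding Lq_norm_def Let_def by (auto split: if_splits)
  then have "Lq_norm 2 f = ereal (enn2real ?I powr (1/2))" unfolding Lq_norm_def Let_def by simp
  then show ?thesis by (intro that[of "enn2real ?I powr (1/2)"]) auto
qed

lemma powr_alg:
  fixes M d s :: real
  assumes "M > 0" "d > 0" "s > 2"
  shows "((M/d) powr (1/s))^2 * d = M powr (2/s) * d powr (1 - 2/s)"
    "((M/d) powr (1/s)) powr (2 - s) * M = M powr (2/s) * d powr (1 - 2/s)"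
proof -
  have e: "(M/d) powr (2/s) * d = M powr (2/s) * d powr (1 - 2/s)"
    using assms by (simp add: powr_divide powr_diff)
  have "((M/d) powr (1/s))^2 = ((M/d) powr (1/s)) powr 2"
    using assms by (subst powr_numeral) auto
  also have "\<dots> = (M/d) powr (2/s)" by (simp add: powr_powr)
  finally have "((M/d) powr (1/s))^2 = (M/d) powr (2/s)" .
  then show "((M/d) powr (1/s))^2 * d = M powr (2/s) * d powr (1 - 2/s)" using e by simp
  have "((M/d) powr (1/s)) powr (2 - s) = (M/d) powr (2/s - 1)"
    unfolding powr_powr using assms by (simp add: diff_divide_distrib)
  also have "\<dots> = (M/d) powr (2/s) / (M/d)" using assms by (simp add: powr_diff)
  finally have r: "((M/d) powr (1/s)) powr (2 - s) = (M/d) powr (2/s) / (M/d)" .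
  have g: "\<And>T. T / (M/d) * M = T * d" using assms by (simp add: field_simps)
  show "((M/d) powr (1/s)) powr (2 - s) * M = M powr (2/s) * d powr (1 - 2/s)"
    unfolding r g e ..
qed

lemma pt1:
  fixes p q :: real
  assumes "0 \<le> p" "0 < q"
  shows "p * ln (p / q) \<le> max 0 (p - q) * (p - ln q)"
proof (cases "p \<le> q")
  case True
  have "p * ln (p/q) \<le> 0"
  proof (cases "p = 0")
    case False
    then have "p > 0" using assms by simp
    then have "ln (p/q) \<le> 0" using True assms by (simp add: ln_div)
    then show ?thesis using \<open>p>0\<close> by (simp add: mult_nonneg_nonpos)
  qed simp
  moreover have "p - ln q \<ge> 0 \<or> max 0 (p-q) = 0" using True by simp
  ultimately show ?thesis using True by auto
next
  case False
  then have pq: "p > q" by simp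
  have pp: "p > 0" using pq assms by simp
  have "ln (p/q) \<le> p/q - 1" using ln_le_minus_one[of "p/q"] pp assms by simp
  then have "q * ln (p/q) \<le> q * (p/q - 1)" using assms by (simp add: mult_left_mono)
  also have "\<dots> = p - q" using assms by (simp add: field_simps)
  finally have a: "q * ln (p/q) \<le> p - q" .
  have b: "ln p \<le> p - 1" using ln_le_minus_one pp by simp
  have "p * ln (p/q) = (p - q) * ln (p/q) + q * ln (p/q)" by (simp add: algebra_simps)
  also have "\<dots> \<le> (p - q) * ln (p/q) + (p - q)" using a by simp
  also have "\<dots> = (p - q) * (1 + ln p - ln q)" using pp assms by (simp add: ln_div algebra_simps)
  also have "\<dots> \<le> (p - q) * (p - ln q)" using b pq by (intro mult_left_mono) auto
  finally show ?thesis using pq by simp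
qed
lemma pt2:
  fixes x R s :: real
  assumes "R > 0" "s > 2"
  shows "x^2 \<le> R^2 + \<bar>x\<bar> powr s * R powr (2 - s)"
proof (cases "\<bar>x\<bar> \<le> R")
  case True
  then have "x^2 \<le> R^2" by (metis abs_ge_zero power2_abs power_mono)
  moreover have "\<bar>x\<bar> powr s * R powr (2 - s) \<ge> 0" by simp
  ultimately show ?thesis by linarith
next
  case False
  then have xr: "\<bar>x\<bar> > R" by simp
  then have xp: "\<bar>x\<bar> > 0" using assms by simp
  have "\<bar>x\<bar> powr (2 - s) \<le> R powr (2 - s)"
    using xr assms by (intro powr_mono2') auto
  then have "\<bar>x\<bar> powr s * \<bar>x\<bar> powr (2 - s) \<le> \<bar>x\<bar> powr s * R powr (2 - s)"
    by (intro mult_left_mono) auto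
  moreover have "\<bar>x\<bar> powr s * \<bar>x\<bar> powr (2 - s) = x^2"
    using xp by (simp add: powr_add[symmetric])
  moreover have "R^2 \<ge> 0" by simp
  ultimately show ?thesis by linarith
qed


lemma main_bound:
  fixes s :: real and p :: "real \<Rightarrow> real"
  assumes s: "s > 2" and pm: "p \<in> borel_measurable borel" and pnn: "\<forall>x. 0 \<le> p x"
    and pint: "integrable lborel p" and p1: "(\<integral>x. p x \<partial>lborel) = 1"
    and hint: "integrable lborel (\<lambda>x. \<bar>x\<bar> powr s * p x)"
    and L2: "Lq_norm 2 (\<lambda>x. p x - phi x) \<le> 1"
  shows "KL_div p \<le>
          (ereal (1 + ln (sqrt (2*pi))) + Linf_norm (\<lambda>x. p x - phi x))
            * (Lq_norm 1 (\<lambda>x. p x - phi x) + Lq_norm 2 (\<lambda>x. p x - phi x))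
        + ereal (1 * (\<integral>x. \<bar>x\<bar> powr s * p x \<partial>lborel) powr (2 / s)
            * (real_of_ereal (Lq_norm 1 (\<lambda>x. p x - phi x) + Lq_norm 2 (\<lambda>x. p x - phi x)))
                powr (1 - 2 / s))"
proof -
  define f where "f = (\<lambda>x. p x - phi x)"
  define N1 where "N1 = (\<integral>x. \<bar>f x\<bar> \<partial>lborel)"
  define M where "M = (\<integral>x. \<bar>x\<bar> powr s * p x \<partial>lborel)"
  define c0 where "c0 = ln (sqrt (2*pi))"
  have c0pos: "c0 > 0" unfolding c0_def using pi_gt3 by simp
  have fint: "integrable lborel f" unfolding f_def
    by (intro Bochner_Integration.integrable_diff pint phi_int)
  have L1: "Lq_norm 1 f = ereal N1" using L1_eq[OF fint] by (simp add: N1_def)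
  obtain N2 where N2: "N2 \<ge> 0" "Lq_norm 2 f = ereal N2" using L2_fin L2 unfolding f_def by blast
  have N1nn: "N1 \<ge> 0" unfolding N1_def by simp
  define d where "d = N1 + N2"
  define G where "G x = max 0 (f x) * (p x - ln (phi x))" for x
  have KLG: "KL_div p \<le> enn2ereal (\<integral>\<^sup>+x. ennreal (G x) \<partial>lborel)"
  proof -
    have "KL_div p \<le> enn2ereal (\<integral>\<^sup>+x. ennreal (p x * ln (p x / phi x)) \<partial>lborel)"
      unfolding KL_div_def ext_integral_def by (rule ereal_diff_le_self) simp
    also have "\<dots> \<le> enn2ereal (\<integral>\<^sup>+x. ennreal (G x) \<partial>lborel)"
      unfolding less_eq_ennreal.rep_eq[symmetric] G_def f_def
      by (intro nn_integral_mono ennreal_leI pt1 phi_facts(1)) (use pnn in auto)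
    finally show ?thesis .
  qed
  have Gnn: "G x \<ge> 0" for x
  proof -
    have e: "p x - ln (phi x) = p x + x^2/2 + c0" using phi_facts(3)[of x] unfolding c0_def by simp
    have "x^2 \<ge> 0" by simp
    then have "p x - ln (phi x) \<ge> 0" unfolding e using pnn c0pos by (smt (verit) divide_nonneg_nonneg)
    then show ?thesis unfolding G_def by simp
  qed
  show ?thesis
  proof (cases "d = 0")
    case True
    then have N10: "N1 = 0" "N2 = 0" using N1nn N2 unfolding d_def by auto
    have "AE x in lborel. \<bar>f x\<bar> = 0"
      using integral_nonneg_eq_0_iff_AE[of lborel "\<lambda>x. \<bar>f x\<bar>"] fint N10 unfolding N1_def by simp
    then have "AE x in lborel. ennreal (G x) = 0"
      by eventually_elim (simp add: G_def)
    then have "(\<integral>\<^sup>+x. ennreal (G x) \<partial>lborel) = 0"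
      by (simp add: nn_integral_cong_AE)
    then have "KL_div p \<le> 0" using KLG by (simp add: zero_ennreal.rep_eq)
    then show ?thesis using L1 N2 N10 unfolding f_def by (simp add: zero_ereal_def[symmetric])
  next
    case False
    then have dpos: "d > 0" using N1nn N2 unfolding d_def by auto
    have AEL: "AE x in lborel. ereal \<bar>f x\<bar> \<le> Linf_norm f"
      unfolding Linf_norm_def by (rule esssup_AE)
    have nb: "ae_filter lborel \<noteq> bot" by (simp add: ae_filter_eq_bot_iff)
    obtain x0 where x0: "ereal \<bar>f x0\<bar> \<le> Linf_norm f"
      using eventually_happens[OF AEL] nb by blast
    show ?thesis
    proof (cases "Linf_norm f")
      case PInf
      then show ?thesis using L1 N2 dpos unfolding f_def d_def by simp
    next
      case MInf
      then show ?thesis using x0 by simp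
    next
      case (real L)
      have L0: "L \<ge> 0" using x0 real by simp
      have AEL2: "AE x in lborel. \<bar>f x\<bar> \<le> L" using AEL real by simp
      have Mnn: "M \<ge> 0" unfolding M_def using pnn by (intro Bochner_Integration.integral_nonneg) simp
      have Mpos: "M > 0"
      proof (rule ccontr)
        assume "\<not> M > 0"
        then have "M = 0" using Mnn by simp
        then have "AE x in lborel. \<bar>x\<bar> powr s * p x = 0"
          using integral_nonneg_eq_0_iff_AE[of lborel "\<lambda>x. \<bar>x\<bar> powr s * p x"] hint pnn
          unfolding M_def by simp
        then have "AE x in lborel. p x = 0"
          using AE_lborel_singleton[of 0] by eventually_elim simp
        then have "(\<integral>x. p x \<partial>lborel) = 0" by (rule integral_eq_zero_AE)
        then show False using p1 by simp
      qed
      define R where "R = (M/d) powr (1/s)"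
      have Rpos: "R > 0" unfolding R_def using Mpos dpos by simp
      define a where "a = 1 + c0 + L + R^2/2"
      define b where "b = R powr (2 - s) / 2"
      have AEG: "AE x in lborel. G x \<le> a * \<bar>f x\<bar> + b * (\<bar>x\<bar> powr s * p x)"
        using AEL2
      proof eventually_elim
        case (elim x)
        define m where "m = max 0 (f x)"
        have m0: "m \<ge> 0" and mf: "m \<le> \<bar>f x\<bar>" unfolding m_def by auto
        have mp: "m \<le> p x" unfolding m_def f_def using pnn phi_facts(1)[of x] by auto
        have p1f: "p x \<le> 1 + L" using elim phi_facts(2)[of x] unfolding f_def by simp
        have Ge: "G x = m * p x + m * c0 + m * x^2 / 2"
          unfolding G_def m_def[symmetric] phi_facts(3) c0_def by (simp add: algebra_simps)
        have i1: "m * p x \<le> \<bar>f x\<bar> * (1 + L)" using mf p1f pnn m0 by (intro mult_mono) auto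
        have i2: "m * c0 \<le> \<bar>f x\<bar> * c0" using mf c0pos by (intro mult_right_mono) auto
        have "m * x^2 \<le> m * (R^2 + \<bar>x\<bar> powr s * R powr (2 - s))"
          using pt2[OF Rpos s, of x] m0 by (intro mult_left_mono) auto
        also have "\<dots> = m * R^2 + m * (\<bar>x\<bar> powr s * R powr (2 - s))" by (simp add: algebra_simps)
        also have "\<dots> \<le> \<bar>f x\<bar> * R^2 + p x * (\<bar>x\<bar> powr s * R powr (2 - s))"
          using mf mp by (intro add_mono mult_right_mono) auto
        finally have i3: "m * x^2 \<le> \<bar>f x\<bar> * R^2 + p x * (\<bar>x\<bar> powr s * R powr (2 - s))" .
        have "a * \<bar>f x\<bar> + b * (\<bar>x\<bar> powr s * p x)
          = \<bar>f x\<bar> * (1 + L) + \<bar>f x\<bar> * c0 + (\<bar>f x\<bar> * R^2 + p x * (\<bar>x\<bar> powr s * R powr (2 - s))) / 2"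
          unfolding a_def b_def by (simp add: algebra_simps)
        moreover have "m * x^2 / 2 \<le> (\<bar>f x\<bar> * R^2 + p x * (\<bar>x\<bar> powr s * R powr (2 - s))) / 2"
          using i3 by (rule divide_right_mono) simp
        ultimately show ?case using Ge i1 i2 by linarith
      qed
      have anb: "a \<ge> 0" "b \<ge> 0" unfolding a_def b_def using c0pos L0 by auto
      have iint: "integrable lborel (\<lambda>x. a * \<bar>f x\<bar> + b * (\<bar>x\<bar> powr s * p x))"
        using fint hint by (intro Bochner_Integration.integrable_add integrable_mult_right integrable_abs) auto
      have "(\<integral>\<^sup>+x. ennreal (G x) \<partial>lborel) \<le> (\<integral>\<^sup>+x. ennreal (a * \<bar>f x\<bar> + b * (\<bar>x\<bar> powr s * p x)) \<partial>lborel)"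
        using AEG by (intro nn_integral_mono_AE) (auto elim!: eventually_mono intro: ennreal_leI)
      also have "\<dots> = ennreal (\<integral>x. a * \<bar>f x\<bar> + b * (\<bar>x\<bar> powr s * p x) \<partial>lborel)"
        using iint anb pnn by (intro nn_integral_eq_integral) auto
      also have "(\<integral>x. a * \<bar>f x\<bar> + b * (\<bar>x\<bar> powr s * p x) \<partial>lborel) = a * N1 + b * M"
        using fint hint unfolding N1_def M_def by (simp add: integrable_abs)
      finally have "(\<integral>\<^sup>+x. ennreal (G x) \<partial>lborel) \<le> ennreal (a * N1 + b * M)" .
      then have "enn2ereal (\<integral>\<^sup>+x. ennreal (G x) \<partial>lborel) \<le> enn2ereal (ennreal (a * N1 + b * M))"
        by (simp add: less_eq_ennreal.rep_eq[symmetric])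
      also have "\<dots> = ereal (a * N1 + b * M)" using anb N1nn Mnn by (intro enn2ereal_ennreal) simp
      finally have KL1: "KL_div p \<le> ereal (a * N1 + b * M)" using KLG by simp
      define T where "T = M powr (2/s) * d powr (1 - 2/s)"
      have RT: "R^2 * d = T" "R powr (2 - s) * M = T"
        unfolding R_def T_def using powr_alg[OF Mpos dpos s] by auto
      have "a * N1 + b * M = (1 + c0 + L) * N1 + R^2 * N1 / 2 + R powr (2 - s) * M / 2"
        unfolding a_def b_def by (simp add: algebra_simps)
      also have "\<dots> \<le> (1 + c0 + L) * d + R^2 * d / 2 + R powr (2 - s) * M / 2"
        using N2 c0pos L0 unfolding d_def by (intro add_mono mult_left_mono divide_right_mono) auto
      also have "\<dots> = (1 + c0 + L) * d + T" using RT by simp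
      finally have ar: "a * N1 + b * M \<le> (1 + c0 + L) * d + T" .
      have rhs: "(ereal (1 + c0) + ereal L) * (ereal N1 + ereal N2)
         + ereal (1 * M powr (2 / s) * (real_of_ereal (ereal N1 + ereal N2)) powr (1 - 2 / s))
         = ereal ((1 + c0 + L) * d + T)"
        unfolding T_def d_def by simp
      have "KL_div p \<le> (ereal (1 + c0) + ereal L) * (ereal N1 + ereal N2)
         + ereal (1 * M powr (2 / s) * (real_of_ereal (ereal N1 + ereal N2)) powr (1 - 2 / s))"
        unfolding rhs using KL1 ar by (meson ereal_less_eq(3) order_trans)
      then show ?thesis using L1 N2 real unfolding f_def M_def c0_def by simp
    qed
  qed
qed


theorem corollary2p3:
  fixes s :: real
  assumes "s > 2"
  shows "\<exists>C1>0. \<exists>C2>0. \<forall>p :: real \<Rightarrow> real.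
    (p \<in> borel_measurable borel \<and> (\<forall>x. 0 \<le> p x) \<and>
     integrable lborel p \<and> (\<integral>x. p x \<partial>lborel) = 1 \<and>
     integrable lborel (\<lambda>x. x * p x) \<and> (\<integral>x. x * p x \<partial>lborel) = 0 \<and>
     integrable lborel (\<lambda>x. x ^ 2 * p x) \<and> (\<integral>x. x ^ 2 * p x \<partial>lborel) = 1 \<and>
     integrable lborel (\<lambda>x. \<bar>x\<bar> powr s * p x) \<and>
     Lq_norm 2 (\<lambda>x. p x - phi x) \<le> 1)
    \<longrightarrow> KL_div p \<le>
          (ereal C1 + Linf_norm (\<lambda>x. p x - phi x))
            * (Lq_norm 1 (\<lambda>x. p x - phi x) + Lq_norm 2 (\<lambda>x. p x - phi x))
        + ereal (C2 * (\<integral>x. \<bar>x\<bar> powr s * p x \<partial>lborel) powr (2 / s)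
            * (real_of_ereal (Lq_norm 1 (\<lambda>x. p x - phi x) + Lq_norm 2 (\<lambda>x. p x - phi x)))
                powr (1 - 2 / s))"
proof -
  have "0 < ln (sqrt (2*pi))" using pi_gt3 by simp
  then have c: "0 < 1 + ln (sqrt (2*pi))" by linarith
  show ?thesis
    apply (rule exI[of _ "1 + ln (sqrt (2*pi))"])
    apply (rule conjI[OF c])
    apply (rule exI[of _ 1])
    apply (rule conjI)
     apply simp
    apply (intro allI impI)
    apply (elim conjE)
    apply (rule main_bound[OF assms])
         apply assumption+
    done
qed

end
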